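(* There exist sets $\mathcal X,\mathcal Y$, a metric $\ell$ on $\mathcal Y$, and a class $\mathcal H\subseteq\mathcal Y^{\mathcal X}$ such that $\operatorname{diam}(\mathcal H)<\infty$, $\Phi(\mathcal H)=\infty$, and $\mathbb{D}_{\mathrm{onl}}(\mathcal H)<\infty$.
   Context: For $\ell:\mathcal Y\times\mathcal Y\to\mathbb R_{\ge0}$ and $\mathcal H\subseteq\mathcal Y^{\mathcal X}$: $d_\ell(f,g)=\sup_x\ell(f(x),g(x))$, $\operatorname{diam}(\mathcal H)=\sup_{f,g\in\mathcal H}d_\ell(f,g)$, $N(\mathcal H,\varepsilon)$ is the minimal size of $S\subseteq\mathcal H$ such that every $h\in\mathcal H$ is within $d_\ell$-distance $\le\varepsilon$ of some $s\in S$ ($+\infty$ if none finite), and $\Phi(\mathcal H)=\int_0^{\operatorname{diam}(\mathcal H)}\log_2N(\mathcal H,\varepsilon)d\varepsilon$. Scaled Littlestone tree of depth $D\le\infty$: internal nodes $u\in\{0,1\}^{<D}$ labeled $x_u\in\mathcal X$, edges labeled $s_{u,0},s_{u,1}\in\mathcal Y$, gap $\gamma_u=\ell(s_{u,0},s_{u,1})$; realizable by $\mathcal H$ if for every branch $b$ and finite $n\le D$ some $h\in\mathcal{H}$ has $h(x_{b_{\le t}})=s_{b_{\le t},b_{t+1}}$ for $t<n$ ($b_{\le t}$ the length-$t$ prefix). $\mathbb{D}_{\mathrm{onl}}(\mathcal{H})=\sup_{\mathcal T}\inf_b\sum_t\gamma_{b_{\le t}}$ over realizable trees $\mathcal T$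 and branches $b$. *)

theory Defs
  imports "HOL-Analysis.Analysis"
begin

text \<open>The domain and label sets are taken to be the full types 'x and 'y.\<close>

definition is_metric :: "('y \<Rightarrow> 'y \<Rightarrow> real) \<Rightarrow> bool" where
  "is_metric l \<longleftrightarrow> (\<forall>a b. 0 \<le> l a b) \<and> (\<forall>a b. l a b = 0 \<longleftrightarrow> a = b)
     \<and> (\<forall>a b. l a b = l b a) \<and> (\<forall>a b c. l a c \<le> l a b + l b c)"

definition dist_l :: "('y \<Rightarrow> 'y \<Rightarrow> real) \<Rightarrow> ('x \<Rightarrow> 'y) \<Rightarrow> ('x \<Rightarrow> 'y) \<Rightarrow> ereal" where
  "dist_l l f g = (SUP x. ereal (l (f x) (g x)))"

definition diam_l :: "('y \<Rightarrow> 'y \<Rightarrow> real) \<Rightarrow> ('x \<Rightarrow> 'y) set \<Rightarrow> ereal" where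
  "diam_l l H = (SUP f\<in>H. SUP g\<in>H. dist_l l f g)"

definition cover_num :: "('y \<Rightarrow> 'y \<Rightarrow> real) \<Rightarrow> ('x \<Rightarrow> 'y) set \<Rightarrow> real \<Rightarrow> enat" where
  "cover_num l H eps = (INF S \<in> {S. S \<subseteq> H \<and> finite S \<and> (\<forall>h\<in>H. \<exists>s\<in>S. dist_l l h s \<le> ereal eps)}.
      enat (card S))"

definition log2_enat :: "enat \<Rightarrow> ennreal" where
  "log2_enat n = (case n of enat k \<Rightarrow> ennreal (log 2 (real k)) | \<infinity> \<Rightarrow> \<infinity>)"

definition Phi :: "('y \<Rightarrow> 'y \<Rightarrow> real) \<Rightarrow> ('x \<Rightarrow> 'y) set \<Rightarrow> ennreal" where
  "Phi l H = (\<integral>\<^sup>+ eps. indicator {e::real. 0 < e \<and> ereal e < diam_l l H} eps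
                  * log2_enat (cover_num l H eps) \<partial>lborel)"

text \<open>Scaled Littlestone trees: node labels xl :: bool list \<Rightarrow> 'x, edge labels
  sl u b (b = False for edge 0, True for edge 1), depth D (possibly infinite).
  Only nodes u with length u < D matter. Branches are infinite bit sequences; for
  finite D only the first D bits matter.\<close>

definition prefix_of :: "(nat \<Rightarrow> bool) \<Rightarrow> nat \<Rightarrow> bool list" where
  "prefix_of b t = map b [0..<t]"

definition realizable_tree ::
  "('x \<Rightarrow> 'y) set \<Rightarrow> (bool list \<Rightarrow> 'x) \<Rightarrow> (bool list \<Rightarrow> bool \<Rightarrow> 'y) \<Rightarrow> enat \<Rightarrow> bool" where
  "realizable_tree H xl sl D \<longleftrightarrow>
     (\<forall>b::nat \<Rightarrow> bool. \<forall>n::nat. enat n \<le> D \<longrightarrow>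
        (\<exists>h\<in>H. \<forall>t<n. h (xl (prefix_of b t)) = sl (prefix_of b t) (b t)))"

definition branch_loss ::
  "('y \<Rightarrow> 'y \<Rightarrow> real) \<Rightarrow> (bool list \<Rightarrow> bool \<Rightarrow> 'y) \<Rightarrow> enat \<Rightarrow> (nat \<Rightarrow> bool) \<Rightarrow> ennreal" where
  "branch_loss l sl D b = (\<Sum>t. if enat t < D
       then ennreal (l (sl (prefix_of b t) False) (sl (prefix_of b t) True)) else 0)"

definition D_onl :: "('y \<Rightarrow> 'y \<Rightarrow> real) \<Rightarrow> ('x \<Rightarrow> 'y) set \<Rightarrow> ennreal" where
  "D_onl l H = (SUP T \<in> {(xl, sl, D). realizable_tree H xl sl D}.
      (case T of (xl, sl, D) \<Rightarrow> INF b. branch_loss l sl D b))"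

end

theory Submission
  imports Defs
begin

definition Ld :: "real \<Rightarrow> real \<Rightarrow> real" where
  "Ld a b = (if a = b then 0 else 1)"

definition Hs :: "(nat \<Rightarrow> real) set" where
  "Hs = range (\<lambda>i x. if x = i then 1 else 0)"

lemma Ld_metric: "is_metric Ld"
  unfolding is_metric_def Ld_def by auto

lemma dist_le1: "dist_l Ld f g \<le> 1"
  unfolding dist_l_def Ld_def by (rule SUP_least) auto

lemma dist_ge: "ereal (Ld (f x) (g x)) \<le> dist_l Ld f g"
  unfolding dist_l_def by (rule SUP_upper) auto

lemma diam_eq: "diam_l Ld Hs = 1"
proof (rule antisym)
  show "diam_l Ld Hs \<le> 1" unfolding diam_l_def
    by (intro SUP_least dist_le1)
  let ?h0 = "(\<lambda>x. if x = (0::nat) then 1 else 0) :: nat \<Rightarrow> real"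
  let ?h1 = "(\<lambda>x. if x = (1::nat) then 1 else 0) :: nat \<Rightarrow> real"
  have m: "?h0 \<in> Hs" "?h1 \<in> Hs" unfolding Hs_def by auto
  have "(1::ereal) = ereal (Ld (?h0 0) (?h1 0))" by (simp add: Ld_def)
  also have "\<dots> \<le> dist_l Ld ?h0 ?h1" by (rule dist_ge)
  also have "\<dots> \<le> (SUP g\<in>Hs. dist_l Ld ?h0 g)" by (rule SUP_upper[OF m(2)])
  also have "\<dots> \<le> diam_l Ld Hs" unfolding diam_l_def by (rule SUP_upper[OF m(1)])
  finally show "1 \<le> diam_l Ld Hs" .
qed

lemma Hs_inf: "infinite Hs"
proof -
  have "inj (\<lambda>i::nat. (\<lambda>x::nat. if x = i then 1 else (0::real)))"
    by (rule injI) (metis zero_neq_one)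
  then show ?thesis unfolding Hs_def using finite_imageD by blast
qed

lemma cover_inf:
  assumes "eps < 1"
  shows "cover_num Ld Hs eps = \<infinity>"
proof -
  have "{S. S \<subseteq> Hs \<and> finite S \<and> (\<forall>h\<in>Hs. \<exists>s\<in>S. dist_l Ld h s \<le> ereal eps)} = {}"
  proof (rule ccontr)
    assume "\<not> ?thesis"
    then obtain S where S: "S \<subseteq> Hs" "finite S" "\<forall>h\<in>Hs. \<exists>s\<in>S. dist_l Ld h s \<le> ereal eps"
      by auto
    have "Hs \<subseteq> S"
    proof
      fix h assume h: "h \<in> Hs"
      then obtain s where s: "s \<in> S" "dist_l Ld h s \<le> ereal eps" using S by auto
      have "h = s"
      proof (rule ccontr)
        assume "h \<noteq> s"
        then obtain x where "h x \<noteq> s x" by auto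
        then have "ereal 1 \<le> dist_l Ld h s" using dist_ge[where f=h and g=s and x=x] by (simp add: Ld_def)
        with s(2) assms show False
          by (metis ereal_less_eq(3) not_le order_trans)
      qed
      then show "h \<in> S" using s by simp
    qed
    then show False using S(2) Hs_inf finite_subset by blast
  qed
  then show ?thesis unfolding cover_num_def by (simp only: image_empty Inf_empty top_enat_def)
qed

lemma Phi_inf: "Phi Ld Hs = \<infinity>"
proof -
  have "Phi Ld Hs = (\<integral>\<^sup>+ e. \<infinity> * indicator {0<..<1::real} e \<partial>lborel)"
    unfolding Phi_def diam_eq
    by (intro nn_integral_cong) (auto simp: indicator_def cover_inf log2_enat_def)
  also have "\<dots> = \<infinity>" by (simp add: nn_integral_cmult_indicator)
  finally show ?thesis .
qed

lemma Hs_vals: "h \<in> Hs \<Longrightarrow> h x = 0 \<or> h x = 1"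
  unfolding Hs_def by auto

lemma prefix_upd: "s \<le> t \<Longrightarrow> prefix_of (b(t := c)) s = prefix_of b s"
  unfolding prefix_of_def by auto

lemma branch_bound:
  assumes R: "realizable_tree Hs xl sl D"
  shows "\<exists>b. branch_loss Ld sl D b \<le> 1"
proof -
  define pth where "pth = rec_nat [] (\<lambda>t p. p @ [sl p True = 1])"
  define b where "b t = (sl (pth t) True = 1)" for t
  have pre: "prefix_of b t = pth t" for t
    by (induction t) (simp_all add: prefix_of_def b_def pth_def)
  have bt: "b t = (sl (prefix_of b t) True = 1)" for t using pre b_def by simp
  define f where "f t = (if enat t < D then ennreal (Ld (sl (prefix_of b t) False) (sl (prefix_of b t) True)) else 0)" for t
  have key: "\<exists>h0 h1. h0\<in>Hs \<and> h1\<in>Hs \<and> (\<forall>s<t. h0 (xl (prefix_of b s)) = sl (prefix_of b s) (b s))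
      \<and> (\<forall>s<t. h1 (xl (prefix_of b s)) = sl (prefix_of b s) (b s))
      \<and> h0 (xl (prefix_of b t)) = sl (prefix_of b t) False
      \<and> h1 (xl (prefix_of b t)) = sl (prefix_of b t) True
      \<and> sl (prefix_of b t) False \<noteq> sl (prefix_of b t) True" if ft: "f t \<noteq> 0" for t
  proof -
    have D: "enat (Suc t) \<le> D" using ft unfolding f_def by (auto split: if_splits simp: Suc_ile_eq)
    have ne: "sl (prefix_of b t) False \<noteq> sl (prefix_of b t) True"
      using ft unfolding f_def Ld_def by (auto split: if_splits)
    have ex: "\<exists>h\<in>Hs. (\<forall>s<t. h (xl (prefix_of b s)) = sl (prefix_of b s) (b s))
       \<and> h (xl (prefix_of b t)) = sl (prefix_of b t) c" for c
    proof -
      obtain h where h: "h \<in> Hs" "\<forall>s<Suc t. h (xl (prefix_of (b(t:=c)) s)) = sl (prefix_of (b(t:=c)) s) ((b(t:=c)) s)"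
        using R D unfolding realizable_tree_def by blast
      have "\<forall>s<t. h (xl (prefix_of b s)) = sl (prefix_of b s) (b s)"
      proof (intro allI impI)
        fix s assume "s < t"
        then show "h (xl (prefix_of b s)) = sl (prefix_of b s) (b s)"
          using h(2)[rule_format, of s] prefix_upd[of s t b c] by auto
      qed
      moreover have "h (xl (prefix_of b t)) = sl (prefix_of b t) c"
        using h(2)[rule_format, of t] prefix_upd[of t t b c] by auto
      ultimately show ?thesis using h(1) by blast
    qed
    from ex[of False] ex[of True] ne show ?thesis by blast
  qed
  have key2: False if K: "f t1 \<noteq> 0" "f t2 \<noteq> 0" "t1 < t2" for t1 t2
  proof -
    obtain h0 h1 where k1: "h0\<in>Hs" "h1\<in>Hs"
      "h0 (xl (prefix_of b t1)) = sl (prefix_of b t1) False"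
      "h1 (xl (prefix_of b t1)) = sl (prefix_of b t1) True"
      "sl (prefix_of b t1) False \<noteq> sl (prefix_of b t1) True"
      using key[OF K(1)] by blast
    have one: "sl (prefix_of b t1) (b t1) = 1"
      using Hs_vals[OF k1(1)] Hs_vals[OF k1(2)] k1(3-5) bt[of t1]
      by (cases "b t1") (auto, metis)
    obtain g0 g1 where k2: "g0\<in>Hs" "g1\<in>Hs"
      "\<forall>s<t2. g0 (xl (prefix_of b s)) = sl (prefix_of b s) (b s)"
      "\<forall>s<t2. g1 (xl (prefix_of b s)) = sl (prefix_of b s) (b s)"
      "g0 (xl (prefix_of b t2)) = sl (prefix_of b t2) False"
      "g1 (xl (prefix_of b t2)) = sl (prefix_of b t2) True"
      "sl (prefix_of b t2) False \<noteq> sl (prefix_of b t2) True"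
      using key[OF K(2)] by blast
    have a: "g0 (xl (prefix_of b t1)) = 1" "g1 (xl (prefix_of b t1)) = 1"
      using k2(3,4) K(3) one by auto
    have "g0 = g1"
      using k2(1,2) a unfolding Hs_def by (auto split: if_splits)
    then show False using k2(5-7) by simp
  qed
  obtain t0 where t0: "\<And>t. t \<noteq> t0 \<Longrightarrow> f t = 0"
  proof (cases "\<exists>t. f t \<noteq> 0")
    case True
    then obtain t0 where "f t0 \<noteq> 0" by blast
    then have "f t = 0" if "t \<noteq> t0" for t
      using key2 that by (metis linorder_neqE_nat)
    then show ?thesis using that by blast
  next
    case False then show ?thesis using that by blast
  qed
  have "branch_loss Ld sl D b = suminf f"
    unfolding branch_loss_def f_def by simp
  also have "\<dots> = sum f {t0}"
    by (rule suminf_finite) (auto intro: t0)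
  also have "\<dots> \<le> 1" by (simp add: f_def Ld_def)
  finally show ?thesis by blast
qed

lemma D_onl_le: "D_onl Ld Hs \<le> 1"
  unfolding D_onl_def
proof (rule SUP_least)
  fix T assume "T \<in> {(xl, sl, D). realizable_tree Hs xl sl D}"
  then obtain xl sl D where T: "T = (xl, sl, D)" "realizable_tree Hs xl sl D" by auto
  obtain b where "branch_loss Ld sl D b \<le> 1" using branch_bound[OF T(2)] by blast
  then show "(case T of (xl, sl, D) \<Rightarrow> INF b. branch_loss Ld sl D b) \<le> 1"
    unfolding T(1) prod.case by (meson INF_lower2 UNIV_I)
qed

theorem proposition1p9:
  shows "\<exists>(l :: real \<Rightarrow> real \<Rightarrow> real) (H :: (nat \<Rightarrow> real) set).
           is_metric l \<and> diam_l l H < \<infinity> \<and> Phi l H = \<infinity> \<and> D_onl l H < \<infinity>"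
proof -
  have a: "D_onl Ld Hs < \<infinity>"
    using le_less_trans[OF D_onl_le ennreal_one_less_top] by simp
  have b: "diam_l Ld Hs < \<infinity>" unfolding diam_eq by simp
  show ?thesis
    apply (rule exI[of _ Ld])
    apply (rule exI[of _ Hs])
    using Ld_metric a b Phi_inf by (intro conjI)
qed

end
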